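(* Let $G=(V,E)$ be a graph with colouring $f:V\to\{B,R\}$. There exists an optimal solution $E'$ to the MIE problem on $(G,f)$ such that no edge of $E'\setminus E$ is incident to a red node and no edge of $E\setminus E'$ is incident to a blue node (i.e., every added edge joins two blue nodes and every removed edge joins two red nodes).
   Context: Graphs are finite, simple and undirected. A colouring $f:V\to\{B,R\}$ partitions $V$ into the blue nodes $B=f^{-1}(B)$ and red nodes $R=f^{-1}(R)$. For an edge set $E'$ on $V$ and $v\in V$, let $b_{E'}(v)$ and $r_{E'}(v)$ be the numbers of blue and red neighbours of $v$ in $(V,E')$. A node $v$ is under (majority) illusion in $(V,E')$ if $r_{E'}(v)>b_{E'}(v)$. Standing assumption: $|B|>|R|$. An optimal solution to MIE is an edge set $E'$ on $V$ such that no node is under illusion in $(V,E')$ and $|E\setminus E'|+|E'\setminus E|$ is minimum among all such sets. *)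

theory Defs
  imports Main
begin

datatype colour = Blue | Red

definition edge_set_on :: "'a set \<Rightarrow> 'a set set \<Rightarrow> bool" where
  "edge_set_on V E \<longleftrightarrow> (\<forall>e\<in>E. \<exists>u v. e = {u, v} \<and> u \<noteq> v \<and> u \<in> V \<and> v \<in> V)"

definition is_graph :: "'a set \<Rightarrow> 'a set set \<Rightarrow> bool" where
  "is_graph V E \<longleftrightarrow> finite V \<and> edge_set_on V E"

definition blue_nbrs :: "('a \<Rightarrow> colour) \<Rightarrow> 'a set set \<Rightarrow> 'a \<Rightarrow> nat" where
  "blue_nbrs f E v = card {u. {u, v} \<in> E \<and> f u = Blue}"

definition red_nbrs :: "('a \<Rightarrow> colour) \<Rightarrow> 'a set set \<Rightarrow> 'a \<Rightarrow> nat" where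
  "red_nbrs f E v = card {u. {u, v} \<in> E \<and> f u = Red}"

definition under_illusion :: "('a \<Rightarrow> colour) \<Rightarrow> 'a set set \<Rightarrow> 'a \<Rightarrow> bool" where
  "under_illusion f E v \<longleftrightarrow> red_nbrs f E v > blue_nbrs f E v"

definition mie_feasible :: "'a set \<Rightarrow> ('a \<Rightarrow> colour) \<Rightarrow> 'a set set \<Rightarrow> bool" where
  "mie_feasible V f E' \<longleftrightarrow> edge_set_on V E' \<and> (\<forall>v\<in>V. \<not> under_illusion f E' v)"

definition mie_cost :: "'a set set \<Rightarrow> 'a set set \<Rightarrow> nat" where
  "mie_cost E E' = card (E - E') + card (E' - E)"

definition mie_optimal :: "'a set \<Rightarrow> 'a set set \<Rightarrow> ('a \<Rightarrow> colour) \<Rightarrow> 'a set set \<Rightarrow> bool" where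
  "mie_optimal V E f E' \<longleftrightarrow> mie_feasible V f E' \<and>
     (\<forall>E''. mie_feasible V f E'' \<longrightarrow> mie_cost E E' \<le> mie_cost E E'')"

end

theory Submission
  imports Defs
begin

definition nb :: "('a \<Rightarrow> colour) \<Rightarrow> 'a set set \<Rightarrow> 'a \<Rightarrow> colour \<Rightarrow> 'a set" where
  "nb f X v c = {u. {u, v} \<in> X \<and> f u = c}"

definition bad :: "('a \<Rightarrow> colour) \<Rightarrow> 'a set set \<Rightarrow> 'a set set \<Rightarrow> nat" where
  "bad f E X = card {e\<in>X - E. \<exists>v\<in>e. f v = Red} + card {e\<in>E - X. \<exists>v\<in>e. f v = Blue}"

lemma edge_mem: "edge_set_on V X \<Longrightarrow> {u,v} \<in> X \<Longrightarrow> u \<in> V \<and> v \<in> V \<and> u \<noteq> v"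
  unfolding edge_set_on_def by (smt (verit) doubleton_eq_iff insert_iff)

lemma edge_fin: "edge_set_on V X \<Longrightarrow> finite V \<Longrightarrow> finite X"
proof -
  assume a: "edge_set_on V X" "finite V"
  have "X \<subseteq> Pow V"
  proof
    fix e assume "e \<in> X"
    then obtain u v where "e = {u,v}" "u \<in> V" "v \<in> V" using a(1) unfolding edge_set_on_def by metis
    thus "e \<in> Pow V" by simp
  qed
  thus ?thesis using a(2) by (meson finite_Pow_iff finite_subset)
qed

lemma nb_sub: "edge_set_on V X \<Longrightarrow> nb f X v c \<subseteq> V"
proof
  fix u assume "edge_set_on V X" "u \<in> nb f X v c"
  thus "u \<in> V" unfolding nb_def using edge_mem[of V X u v] by simp
qed

lemma nb_fin: "edge_set_on V X \<Longrightarrow> finite V \<Longrightarrow> finite (nb f X v c)"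
  by (meson nb_sub finite_subset)

lemma feas_iff: "mie_feasible V f X \<longleftrightarrow> edge_set_on V X \<and> (\<forall>v\<in>V. card (nb f X v Red) \<le> card (nb f X v Blue))"
  unfolding mie_feasible_def under_illusion_def red_nbrs_def blue_nbrs_def nb_def by auto

lemma node_mono:
  assumes "finite (nb f Y v Blue)" "nb f Y v Red \<subseteq> nb f X v Red" "nb f X v Blue \<subseteq> nb f Y v Blue"
    "finite (nb f X v Red)" "card (nb f X v Red) \<le> card (nb f X v Blue)"
  shows "card (nb f Y v Red) \<le> card (nb f Y v Blue)"
proof -
  have "card (nb f Y v Red) \<le> card (nb f X v Red)" using assms(2,4) by (intro card_mono)
  moreover have "card (nb f X v Blue) \<le> card (nb f Y v Blue)" using assms(1,3) by (intro card_mono)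
  ultimately show ?thesis using assms(5) by (meson le_trans)
qed


lemma nb_mono: "Y \<subseteq> X \<Longrightarrow> nb f Y v c \<subseteq> nb f X v c"
  unfolding nb_def by auto

lemma edge_sub: "edge_set_on V X \<Longrightarrow> Y \<subseteq> X \<Longrightarrow> edge_set_on V Y"
  unfolding edge_set_on_def by blast

lemma edge_ins: "edge_set_on V X \<Longrightarrow> a \<in> V \<Longrightarrow> b \<in> V \<Longrightarrow> a \<noteq> b \<Longrightarrow> edge_set_on V (insert {a,b} X)"
  unfolding edge_set_on_def by blast

definition improv where
  "improv V E f X \<longleftrightarrow> (\<exists>Y. mie_feasible V f Y \<and> mie_cost E Y \<le> mie_cost E X \<and> bad f E Y < bad f E X)"

lemma cost_A:
  assumes "finite E" "finite X" "finite Y" "E - Y \<subseteq> insert g (E - X)" "Y - E \<subseteq> (X - E) - {e}" "e \<in> X - E"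
  shows "mie_cost E Y \<le> mie_cost E X"
proof -
  have f1: "finite (E - X)" "finite (X - E)" using assms by auto
  have "card (E - Y) \<le> card (insert g (E - X))" using assms(4) f1 by (intro card_mono) auto
  also have "\<dots> \<le> card (E - X) + 1" using f1 by (simp add: card_insert_if)
  finally have c1: "card (E - Y) \<le> card (E - X) + 1" .
  have "card (Y - E) \<le> card ((X - E) - {e})" using assms(5) f1 by (intro card_mono) auto
  also have "\<dots> = card (X - E) - 1" using assms(6) f1 by simp
  finally have c2: "card (Y - E) \<le> card (X - E) - 1" .
  have "card (X - E) \<ge> 1" using assms(6) f1
    by (metis One_nat_def Suc_leI card_gt_0_iff empty_iff)
  thus ?thesis using c1 c2 unfolding mie_cost_def by linarith
qed

lemma cost_B:
  assumes "finite E" "finite X" "finite Y" "Y - E \<subseteq> insert g (X - E)" "E - Y \<subseteq> (E - X) - {e}" "e \<in> E - X"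
  shows "mie_cost E Y \<le> mie_cost E X"
proof -
  have f1: "finite (E - X)" "finite (X - E)" using assms by auto
  have "card (Y - E) \<le> card (insert g (X - E))" using assms(4) f1 by (intro card_mono) auto
  also have "\<dots> \<le> card (X - E) + 1" using f1 by (simp add: card_insert_if)
  finally have c1: "card (Y - E) \<le> card (X - E) + 1" .
  have "card (E - Y) \<le> card ((E - X) - {e})" using assms(5) f1 by (intro card_mono) auto
  also have "\<dots> = card (E - X) - 1" using assms(6) f1 by simp
  finally have c2: "card (E - Y) \<le> card (E - X) - 1" .
  have "card (E - X) \<ge> 1" using assms(6) f1
    by (metis One_nat_def Suc_leI card_gt_0_iff empty_iff)
  thus ?thesis using c1 c2 unfolding mie_cost_def by linarith
qed

lemma card_sub_less: "finite A \<Longrightarrow> B \<subseteq> A - {e} \<Longrightarrow> e \<in> A \<Longrightarrow> card B < card A"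
proof -
  assume a: "finite A" "B \<subseteq> A - {e}" "e \<in> A"
  have "card B \<le> card (A - {e})" using a(1,2) by (intro card_mono) auto
  also have "\<dots> < card A" using a(1,3) by (rule card_Diff1_less)
  finally show ?thesis .
qed

lemma bad_A:
  assumes "finite E" "finite X" "finite Y" "E - Y \<subseteq> insert g (E - X)" "Y - E \<subseteq> (X - E) - {e}" "e \<in> X - E"
    "\<exists>v\<in>e. f v = Red" "\<forall>v\<in>g. f v = Red"
  shows "bad f E Y < bad f E X"
proof -
  have f1: "finite {d\<in>X - E. \<exists>v\<in>d. f v = Red}" "finite {d\<in>E - X. \<exists>v\<in>d. f v = Blue}" using assms(1,2) by auto
  have s1: "{d\<in>Y - E. \<exists>v\<in>d. f v = Red} \<subseteq> {d\<in>X - E. \<exists>v\<in>d. f v = Red} - {e}" using assms(5) by blast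
  have s2: "e \<in> {d\<in>X - E. \<exists>v\<in>d. f v = Red}" using assms(6,7) by blast
  have c1: "card {d\<in>Y - E. \<exists>v\<in>d. f v = Red} < card {d\<in>X - E. \<exists>v\<in>d. f v = Red}"
    using f1(1) s1 s2 by (rule card_sub_less)
  have gb: "\<not> (\<exists>v\<in>g. f v = Blue)" using assms(8) by auto
  have "{d\<in>E - Y. \<exists>v\<in>d. f v = Blue} \<subseteq> {d\<in>E - X. \<exists>v\<in>d. f v = Blue}"
    using assms(4) gb by blast
  hence "card {d\<in>E - Y. \<exists>v\<in>d. f v = Blue} \<le> card {d\<in>E - X. \<exists>v\<in>d. f v = Blue}"
    using f1(2) by (intro card_mono)
  thus ?thesis using c1 unfolding bad_def by linarith
qed

lemma bad_B:
  assumes "finite E" "finite X" "finite Y" "Y - E \<subseteq> insert g (X - E)" "E - Y \<subseteq> (E - X) - {e}" "e \<in> E - X"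
    "\<exists>v\<in>e. f v = Blue" "\<forall>v\<in>g. f v = Blue"
  shows "bad f E Y < bad f E X"
proof -
  have f1: "finite {d\<in>X - E. \<exists>v\<in>d. f v = Red}" "finite {d\<in>E - X. \<exists>v\<in>d. f v = Blue}" using assms(1,2) by auto
  have s1: "{d\<in>E - Y. \<exists>v\<in>d. f v = Blue} \<subseteq> {d\<in>E - X. \<exists>v\<in>d. f v = Blue} - {e}" using assms(5) by blast
  have s2: "e \<in> {d\<in>E - X. \<exists>v\<in>d. f v = Blue}" using assms(6,7) by blast
  have c1: "card {d\<in>E - Y. \<exists>v\<in>d. f v = Blue} < card {d\<in>E - X. \<exists>v\<in>d. f v = Blue}"
    using f1(2) s1 s2 by (rule card_sub_less)
  have gb: "\<not> (\<exists>v\<in>g. f v = Red)" using assms(8) by auto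
  have "{d\<in>Y - E. \<exists>v\<in>d. f v = Red} \<subseteq> {d\<in>X - E. \<exists>v\<in>d. f v = Red}"
    using assms(4) gb by blast
  hence "card {d\<in>Y - E. \<exists>v\<in>d. f v = Red} \<le> card {d\<in>X - E. \<exists>v\<in>d. f v = Red}"
    using f1(1) by (intro card_mono)
  thus ?thesis using c1 unfolding bad_def by linarith
qed


lemma ne2: "f u \<noteq> f x \<Longrightarrow> v \<noteq> x \<Longrightarrow> {u,v} \<noteq> {x,y}"
  by (auto simp: doubleton_eq_iff)

lemma ne_col: "f u \<noteq> f x \<Longrightarrow> f u \<noteq> f y \<Longrightarrow> {u,v} \<noteq> {x,y}"
  by (auto simp: doubleton_eq_iff)

lemma caseA1:
  assumes fin: "finite V" and gE: "edge_set_on V E" and F: "mie_feasible V f X"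
    and e: "{x,y} \<in> X - E" and c: "f x = Red" "f y = Red"
  shows "improv V E f X"
proof -
  define Y where "Y = X - {{x,y}}"
  have eX: "edge_set_on V X" using F feas_iff by blast
  have eY: "edge_set_on V Y" using eX edge_sub unfolding Y_def by blast
  have "mie_feasible V f Y"
    unfolding feas_iff
  proof (intro conjI ballI)
    show "edge_set_on V Y" by (rule eY)
    fix v assume v: "v \<in> V"
    have h: "card (nb f X v Red) \<le> card (nb f X v Blue)" using F v feas_iff by blast
    have s1: "nb f Y v Red \<subseteq> nb f X v Red" unfolding Y_def by (rule nb_mono) auto
    have s2: "nb f X v Blue \<subseteq> nb f Y v Blue"
    proof
      fix u assume u: "u \<in> nb f X v Blue"
      hence "{u,v} \<noteq> {x,y}" using c by (auto simp: nb_def doubleton_eq_iff)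
      thus "u \<in> nb f Y v Blue" using u unfolding nb_def Y_def by auto
    qed
    show "card (nb f Y v Red) \<le> card (nb f Y v Blue)"
      using nb_fin[OF eY fin] s1 s2 nb_fin[OF eX fin] h by (rule node_mono)
  qed
  moreover have fE: "finite E" using gE fin edge_fin by blast
  moreover have fX: "finite X" using eX fin edge_fin by blast
  moreover have fY: "finite Y" using eY fin edge_fin by blast
  moreover have d1: "E - Y \<subseteq> insert {} (E - X)" using e unfolding Y_def by blast
  moreover have d2: "Y - E \<subseteq> (X - E) - {{x,y}}" unfolding Y_def by blast
  ultimately show ?thesis unfolding improv_def
    using cost_A[OF fE fX fY d1 d2 e] bad_A[OF fE fX fY d1 d2 e, of f] c by auto
qed

lemma caseA2a:
  assumes fin: "finite V" and gE: "edge_set_on V E" and F: "mie_feasible V f X"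
    and e: "{r,b} \<in> X - E" and c: "f r = Red" "f b = Blue" and z: "nb f X r Red = {}"
  shows "improv V E f X"
proof -
  define Y where "Y = X - {{r,b}}"
  have eX: "edge_set_on V X" using F feas_iff by blast
  have eY: "edge_set_on V Y" using eX edge_sub unfolding Y_def by blast
  have "mie_feasible V f Y"
    unfolding feas_iff
  proof (intro conjI ballI)
    show "edge_set_on V Y" by (rule eY)
    fix v assume v: "v \<in> V"
    have h: "card (nb f X v Red) \<le> card (nb f X v Blue)" using F v feas_iff by blast
    have s1: "nb f Y v Red \<subseteq> nb f X v Red" unfolding Y_def by (rule nb_mono) auto
    show "card (nb f Y v Red) \<le> card (nb f Y v Blue)"
    proof (cases "v = r")
      case True
      then have "nb f Y v Red = {}" using s1 z by blast
      thus ?thesis by simp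
    next
      case False
      have s2: "nb f X v Blue \<subseteq> nb f Y v Blue"
      proof
        fix u assume u: "u \<in> nb f X v Blue"
        hence "{u,v} \<noteq> {r,b}" using c False by (auto simp: nb_def doubleton_eq_iff)
        thus "u \<in> nb f Y v Blue" using u unfolding nb_def Y_def by auto
      qed
      show ?thesis
        using nb_fin[OF eY fin] s1 s2 nb_fin[OF eX fin] h by (rule node_mono)
    qed
  qed
  moreover have fE: "finite E" using gE fin edge_fin by blast
  moreover have fX: "finite X" using eX fin edge_fin by blast
  moreover have fY: "finite Y" using eY fin edge_fin by blast
  moreover have d1: "E - Y \<subseteq> insert {} (E - X)" using e unfolding Y_def by blast
  moreover have d2: "Y - E \<subseteq> (X - E) - {{r,b}}" unfolding Y_def by blast
  ultimately show ?thesis unfolding improv_def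
    using cost_A[OF fE fX fY d1 d2 e] bad_A[OF fE fX fY d1 d2 e, of f] c by auto
qed

lemma caseA2b:
  assumes fin: "finite V" and gE: "edge_set_on V E" and F: "mie_feasible V f X"
    and e: "{r,b} \<in> X - E" and c: "f r = Red" "f b = Blue" and r2: "r2 \<in> nb f X r Red"
  shows "improv V E f X"
proof -
  define Y where "Y = X - {{r,b}, {r2,r}}"
  have eX: "edge_set_on V X" using F feas_iff by blast
  have eY: "edge_set_on V Y" using eX edge_sub unfolding Y_def by blast
  have r2c: "f r2 = Red" using r2 unfolding nb_def by auto
  have "mie_feasible V f Y"
    unfolding feas_iff
  proof (intro conjI ballI)
    show "edge_set_on V Y" by (rule eY)
    fix v assume v: "v \<in> V"
    have h: "card (nb f X v Red) \<le> card (nb f X v Blue)" using F v feas_iff by blast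
    have s1: "nb f Y v Red \<subseteq> nb f X v Red" unfolding Y_def by (rule nb_mono) auto
    show "card (nb f Y v Red) \<le> card (nb f Y v Blue)"
    proof (cases "v = r")
      case True
      have t1: "nb f Y r Red \<subseteq> nb f X r Red - {r2}" unfolding nb_def Y_def by auto
      have t2: "nb f X r Blue - {b} \<subseteq> nb f Y r Blue"
      proof
        fix u assume u: "u \<in> nb f X r Blue - {b}"
        hence uc: "f u = Blue" "u \<noteq> b" unfolding nb_def by auto
        have "{u,r} \<noteq> {r,b}" using uc c by (auto simp: doubleton_eq_iff)
        moreover have "{u,r} \<noteq> {r2,r}" using uc c r2c by (auto simp: doubleton_eq_iff)
        ultimately show "u \<in> nb f Y r Blue" using u unfolding nb_def Y_def by auto
      qed
      have bB: "b \<in> nb f X r Blue" using e c unfolding nb_def by (auto simp: insert_commute)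
      have fR: "finite (nb f X r Red)" "finite (nb f X r Blue)" using nb_fin[OF eX fin] by auto
      have "card (nb f Y r Red) \<le> card (nb f X r Red - {r2})"
        using t1 fR by (intro card_mono) auto
      also have "\<dots> = card (nb f X r Red) - 1" using r2 fR by simp
      also have "\<dots> \<le> card (nb f X r Blue) - 1" using h True by simp
      also have "\<dots> = card (nb f X r Blue - {b})" using bB fR by simp
      also have "\<dots> \<le> card (nb f Y r Blue)" using t2 nb_fin[OF eY fin] by (intro card_mono)
      finally show ?thesis using True by simp
    next
      case False
      have s2: "nb f X v Blue \<subseteq> nb f Y v Blue"
      proof
        fix u assume u: "u \<in> nb f X v Blue"
        hence "{u,v} \<noteq> {r,b}" using c False by (auto simp: nb_def doubleton_eq_iff)
        moreover have "{u,v} \<noteq> {r2,r}" using u c r2c by (auto simp: nb_def doubleton_eq_iff)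
        ultimately show "u \<in> nb f Y v Blue" using u unfolding nb_def Y_def by auto
      qed
      show ?thesis
        using nb_fin[OF eY fin] s1 s2 nb_fin[OF eX fin] h by (rule node_mono)
    qed
  qed
  moreover have fE: "finite E" using gE fin edge_fin by blast
  moreover have fX: "finite X" using eX fin edge_fin by blast
  moreover have fY: "finite Y" using eY fin edge_fin by blast
  moreover have d1: "E - Y \<subseteq> insert {r2,r} (E - X)" unfolding Y_def using e by blast
  moreover have d2: "Y - E \<subseteq> (X - E) - {{r,b}}" unfolding Y_def by blast
  moreover have g: "\<forall>v\<in>{r2,r}. f v = Red" using c r2c by auto
  ultimately show ?thesis unfolding improv_def
    using cost_A[OF fE fX fY d1 d2 e] bad_A[OF fE fX fY d1 d2 e, of f] c by auto
qed


lemma caseB1: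
  assumes fin: "finite V" and gE: "edge_set_on V E" and F: "mie_feasible V f X"
    and e: "{x,y} \<in> E - X" and c: "f x = Blue" "f y = Blue"
  shows "improv V E f X"
proof -
  define Y where "Y = insert {x,y} X"
  have eX: "edge_set_on V X" using F feas_iff by blast
  have "{x,y} \<in> E" using e by blast
  hence xy: "x \<in> V" "y \<in> V" "x \<noteq> y" using edge_mem[OF gE] by blast+
  have eY: "edge_set_on V Y" using edge_ins[OF eX xy] unfolding Y_def .
  have "mie_feasible V f Y"
    unfolding feas_iff
  proof (intro conjI ballI)
    show "edge_set_on V Y" by (rule eY)
    fix v assume v: "v \<in> V"
    have h: "card (nb f X v Red) \<le> card (nb f X v Blue)" using F v feas_iff by blast
    have s2: "nb f X v Blue \<subseteq> nb f Y v Blue" unfolding Y_def by (rule nb_mono) auto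
    have s1: "nb f Y v Red \<subseteq> nb f X v Red"
      using c unfolding nb_def Y_def by (auto simp: doubleton_eq_iff)
    show "card (nb f Y v Red) \<le> card (nb f Y v Blue)"
      using nb_fin[OF eY fin] s1 s2 nb_fin[OF eX fin] h by (rule node_mono)
  qed
  moreover have fE: "finite E" using gE fin edge_fin by blast
  moreover have fX: "finite X" using eX fin edge_fin by blast
  moreover have fY: "finite Y" using eY fin edge_fin by blast
  moreover have d1: "Y - E \<subseteq> insert {} (X - E)" using e unfolding Y_def by blast
  moreover have d2: "E - Y \<subseteq> (E - X) - {{x,y}}" unfolding Y_def by blast
  ultimately show ?thesis unfolding improv_def
    using cost_B[OF fE fX fY d1 d2 e] bad_B[OF fE fX fY d1 d2 e, of f] c by auto
qed

lemma caseB2a: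
  assumes fin: "finite V" and gE: "edge_set_on V E" and F: "mie_feasible V f X"
    and e: "{b,r} \<in> E - X" and c: "f r = Red" "f b = Blue"
    and lt: "card (nb f X b Red) < card (nb f X b Blue)"
  shows "improv V E f X"
proof -
  define Y where "Y = insert {b,r} X"
  have eX: "edge_set_on V X" using F feas_iff by blast
  have "{b,r} \<in> E" using e by blast
  hence xy: "b \<in> V" "r \<in> V" "b \<noteq> r" using edge_mem[OF gE] by blast+
  have eY: "edge_set_on V Y" using edge_ins[OF eX xy] unfolding Y_def .
  have "mie_feasible V f Y"
    unfolding feas_iff
  proof (intro conjI ballI)
    show "edge_set_on V Y" by (rule eY)
    fix v assume v: "v \<in> V"
    have h: "card (nb f X v Red) \<le> card (nb f X v Blue)" using F v feas_iff by blast
    have s2: "nb f X v Blue \<subseteq> nb f Y v Blue" unfolding Y_def by (rule nb_mono) auto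
    show "card (nb f Y v Red) \<le> card (nb f Y v Blue)"
    proof (cases "v = b")
      case True
      have t1: "nb f Y b Red \<subseteq> insert r (nb f X b Red)" unfolding nb_def Y_def
        by (auto simp: doubleton_eq_iff)
      have fR: "finite (nb f X b Red)" using nb_fin[OF eX fin] by auto
      have "card (nb f Y b Red) \<le> card (insert r (nb f X b Red))"
        using t1 fR by (intro card_mono) auto
      also have "\<dots> \<le> card (nb f X b Red) + 1" using fR by (simp add: card_insert_if)
      also have "\<dots> \<le> card (nb f X b Blue)" using lt by simp
      also have "\<dots> \<le> card (nb f Y b Blue)" using s2 True nb_fin[OF eY fin] by (intro card_mono) auto
      finally show ?thesis using True by simp
    next
      case False
      have s1: "nb f Y v Red \<subseteq> nb f X v Red"
        using c False unfolding nb_def Y_def by (auto simp: doubleton_eq_iff)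
      show ?thesis
        using nb_fin[OF eY fin] s1 s2 nb_fin[OF eX fin] h by (rule node_mono)
    qed
  qed
  moreover have fE: "finite E" using gE fin edge_fin by blast
  moreover have fX: "finite X" using eX fin edge_fin by blast
  moreover have fY: "finite Y" using eY fin edge_fin by blast
  moreover have d1: "Y - E \<subseteq> insert {} (X - E)" using e unfolding Y_def by blast
  moreover have d2: "E - Y \<subseteq> (E - X) - {{b,r}}" unfolding Y_def by blast
  ultimately show ?thesis unfolding improv_def
    using cost_B[OF fE fX fY d1 d2 e] bad_B[OF fE fX fY d1 d2 e, of f] c by auto
qed

lemma caseB2b:
  assumes fin: "finite V" and gE: "edge_set_on V E" and F: "mie_feasible V f X"
    and e: "{b,r} \<in> E - X" and c: "f r = Red" "f b = Blue"
    and card: "card {v\<in>V. f v = Blue} > card {v\<in>V. f v = Red}"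
    and ge: "\<not> card (nb f X b Red) < card (nb f X b Blue)"
  shows "improv V E f X"
proof -
  have eX: "edge_set_on V X" using F feas_iff by blast
  have "{b,r} \<in> E" using e by blast
  hence xy: "b \<in> V" "r \<in> V" "b \<noteq> r" using edge_mem[OF gE] by blast+
  have hb: "card (nb f X b Red) \<le> card (nb f X b Blue)" using F xy feas_iff by blast
  define BS where "BS = {v\<in>V. f v = Blue}"
  define RS where "RS = {v\<in>V. f v = Red}"
  have fBS: "finite BS" "finite RS" using fin unfolding BS_def RS_def by auto
  have "nb f X b Red \<subseteq> RS - {r}"
  proof
    fix u assume u: "u \<in> nb f X b Red"
    hence ub: "{u,b} \<in> X" and uc: "f u = Red" unfolding nb_def by auto
    have nX: "{b,r} \<notin> X" using e by blast
    have uV: "u \<in> V" using edge_mem[OF eX ub] by simp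
    have "u \<noteq> r"
    proof
      assume "u = r"
      hence "{b,r} \<in> X" using ub by (simp add: insert_commute)
      thus False using nX by simp
    qed
    thus "u \<in> RS - {r}" using uV uc unfolding RS_def by simp
  qed
  hence "card (nb f X b Red) \<le> card (RS - {r})" using fBS by (intro card_mono) auto
  also have "\<dots> = card RS - 1" using xy c fBS unfolding RS_def by simp
  finally have cR: "card (nb f X b Red) \<le> card RS - 1" .
  have "r \<in> RS" using xy c unfolding RS_def by simp
  hence rR: "card RS \<ge> 1" using fBS(2) by (metis One_nat_def Suc_leI card_gt_0_iff empty_iff)
  have cB: "card (BS - {b}) = card BS - 1" using xy c fBS unfolding BS_def by simp
  have sB: "nb f X b Blue \<subseteq> BS - {b}"
  proof
    fix u assume u: "u \<in> nb f X b Blue"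
    hence ub: "{u,b} \<in> X" and uc: "f u = Blue" unfolding nb_def by auto
    have "u \<in> V" "u \<noteq> b" using edge_mem[OF eX ub] by simp_all
    thus "u \<in> BS - {b}" using uc unfolding BS_def by simp
  qed
  have lt: "card (nb f X b Blue) < card (BS - {b})"
    using ge cR rR cB card unfolding BS_def RS_def by linarith
  have "\<not> (BS - {b} \<subseteq> nb f X b Blue)"
  proof
    assume "BS - {b} \<subseteq> nb f X b Blue"
    hence "card (BS - {b}) \<le> card (nb f X b Blue)" using nb_fin[OF eX fin] by (intro card_mono)
    thus False using lt by simp
  qed
  then obtain b2 where b2: "b2 \<in> BS" "b2 \<noteq> b" "b2 \<notin> nb f X b Blue" by blast
  have b2c: "f b2 = Blue" "b2 \<in> V" using b2 unfolding BS_def by auto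
  have b2X: "{b2,b} \<notin> X" using b2 b2c unfolding nb_def by auto
  define Y where "Y = insert {b,r} (insert {b2,b} X)"
  have eY: "edge_set_on V Y" unfolding Y_def
    by (rule edge_ins[OF edge_ins[OF eX b2c(2) xy(1) b2(2)] xy])
  have "mie_feasible V f Y"
    unfolding feas_iff
  proof (intro conjI ballI)
    show "edge_set_on V Y" by (rule eY)
    fix v assume v: "v \<in> V"
    have h: "card (nb f X v Red) \<le> card (nb f X v Blue)" using F v feas_iff by blast
    have s2: "nb f X v Blue \<subseteq> nb f Y v Blue" unfolding Y_def by (rule nb_mono) auto
    show "card (nb f Y v Red) \<le> card (nb f Y v Blue)"
    proof (cases "v = b")
      case True
      have t1: "nb f Y b Red \<subseteq> insert r (nb f X b Red)" unfolding nb_def Y_def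
        using b2c c by (auto simp: doubleton_eq_iff)
      have t2: "insert b2 (nb f X b Blue) \<subseteq> nb f Y b Blue" using s2 True b2c
        unfolding nb_def Y_def by auto
      have fR: "finite (nb f X b Red)" "finite (nb f X b Blue)" using nb_fin[OF eX fin] by auto
      have "card (nb f Y b Red) \<le> card (insert r (nb f X b Red))"
        using t1 fR by (intro card_mono) auto
      also have "\<dots> \<le> card (nb f X b Red) + 1" using fR by (simp add: card_insert_if)
      also have "\<dots> \<le> card (nb f X b Blue) + 1" using hb by simp
      also have "\<dots> = card (insert b2 (nb f X b Blue))" using fR b2 by simp
      also have "\<dots> \<le> card (nb f Y b Blue)" using t2 nb_fin[OF eY fin] by (intro card_mono)
      finally show ?thesis using True by simp
    next
      case False
      have s1: "nb f Y v Red \<subseteq> nb f X v Red"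
        using c b2c False unfolding nb_def Y_def by (auto simp: doubleton_eq_iff)
      show ?thesis
        using nb_fin[OF eY fin] s1 s2 nb_fin[OF eX fin] h by (rule node_mono)
    qed
  qed
  moreover have fE: "finite E" using gE fin edge_fin by blast
  moreover have fX: "finite X" using eX fin edge_fin by blast
  moreover have fY: "finite Y" using eY fin edge_fin by blast
  moreover have d1: "Y - E \<subseteq> insert {b2,b} (X - E)" using e unfolding Y_def by blast
  moreover have d2: "E - Y \<subseteq> (E - X) - {{b,r}}" unfolding Y_def by blast
  moreover have g: "\<forall>v\<in>{b2,b}. f v = Blue" using c b2c by auto
  ultimately show ?thesis unfolding improv_def
    using cost_B[OF fE fX fY d1 d2 e] bad_B[OF fE fX fY d1 d2 e, of f] c by auto
qed


lemma other_end: "v \<in> {a,c} \<Longrightarrow> \<exists>y. {a,c} = {v,y}"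
  by (auto simp: insert_commute)

lemma improv_all:
  assumes fin: "finite V" and gE: "edge_set_on V E" and F: "mie_feasible V f X"
    and card: "card {v\<in>V. f v = Blue} > card {v\<in>V. f v = Red}"
    and ne: "\<not> ((\<forall>e\<in>X - E. \<forall>v\<in>e. f v = Blue) \<and> (\<forall>e\<in>E - X. \<forall>v\<in>e. f v = Red))"
  shows "improv V E f X"
proof -
  have eX: "edge_set_on V X" using F feas_iff by blast
  have col: "\<And>z. f z = Red \<or> f z = Blue" by (case_tac "f z") auto
  show ?thesis
  proof (cases "\<forall>e\<in>X - E. \<forall>v\<in>e. f v = Blue")
    case False
    then obtain e v where ev: "e \<in> X - E" "v \<in> e" "f v \<noteq> Blue" by blast
    have vr: "f v = Red" using col ev(3) by blast
    obtain a c where "e = {a,c}" using ev eX unfolding edge_set_on_def by blast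
    then obtain y where ey: "e = {v,y}" using other_end ev(2) by blast
    have eI: "{v,y} \<in> X - E" using ev ey by simp
    show ?thesis
    proof (cases "f y = Red")
      case True
      show ?thesis using caseA1[OF fin gE F eI vr True] .
    next
      case False
      hence yb: "f y = Blue" using col by blast
      show ?thesis
      proof (cases "nb f X v Red = {}")
        case True
        show ?thesis using caseA2a[OF fin gE F eI vr yb True] .
      next
        case False
        then obtain r2 where "r2 \<in> nb f X v Red" by blast
        thus ?thesis using caseA2b[OF fin gE F eI vr yb] by blast
      qed
    qed
  next
    case True
    hence "\<not> (\<forall>e\<in>E - X. \<forall>v\<in>e. f v = Red)" using ne by blast
    then obtain e v where ev: "e \<in> E - X" "v \<in> e" "f v \<noteq> Red" by blast
    have vb: "f v = Blue" using col ev(3) by blast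
    obtain a c where "e = {a,c}" using ev gE unfolding edge_set_on_def by blast
    then obtain y where ey: "e = {v,y}" using other_end ev(2) by blast
    have eI: "{v,y} \<in> E - X" using ev ey by simp
    show ?thesis
    proof (cases "f y = Blue")
      case True
      show ?thesis using caseB1[OF fin gE F eI vb True] .
    next
      case False
      hence yr: "f y = Red" using col by blast
      show ?thesis
      proof (cases "card (nb f X v Red) < card (nb f X v Blue)")
        case True
        show ?thesis using caseB2a[OF fin gE F eI yr vb True] .
      next
        case False
        show ?thesis using caseB2b[OF fin gE F eI yr vb card False] .
      qed
    qed
  qed
qed

theorem mainTheorem5:
  fixes V :: "'a set" and E :: "'a set set" and f :: "'a \<Rightarrow> colour"
  assumes "is_graph V E"
    and "card {v\<in>V. f v = Blue} > card {v\<in>V. f v = Red}"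
  shows "\<exists>E'. mie_optimal V E f E' \<and>
           (\<forall>e\<in>E' - E. \<forall>v\<in>e. f v = Blue) \<and>
           (\<forall>e\<in>E - E'. \<forall>v\<in>e. f v = Red)"
proof -
  have fin: "finite V" and gE: "edge_set_on V E" using assms(1) unfolding is_graph_def by auto
  have f0: "mie_feasible V f {}" unfolding feas_iff edge_set_on_def nb_def by simp
  obtain E0 where E0: "mie_feasible V f E0" "\<forall>Z. mie_feasible V f Z \<longrightarrow> mie_cost E E0 \<le> mie_cost E Z"
    using ex_has_least_nat[of "mie_feasible V f" "{}" "mie_cost E"] f0 by blast
  hence "mie_optimal V E f E0" unfolding mie_optimal_def by blast
  then obtain E1 where E1: "mie_optimal V E f E1" "\<forall>Z. mie_optimal V E f Z \<longrightarrow> bad f E E1 \<le> bad f E Z"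
    using ex_has_least_nat[of "mie_optimal V E f" E0 "bad f E"] by blast
  have "(\<forall>e\<in>E1 - E. \<forall>v\<in>e. f v = Blue) \<and> (\<forall>e\<in>E - E1. \<forall>v\<in>e. f v = Red)"
  proof (rule ccontr)
    assume ne: "\<not> ?thesis"
    have F: "mie_feasible V f E1" using E1(1) unfolding mie_optimal_def by blast
    obtain Y where Y: "mie_feasible V f Y" "mie_cost E Y \<le> mie_cost E E1" "bad f E Y < bad f E E1"
      using improv_all[OF fin gE F assms(2) ne] unfolding improv_def by blast
    have "mie_optimal V E f Y" using Y(1,2) E1(1) unfolding mie_optimal_def by auto
    thus False using E1(2) Y(3) by fastforce
  qed
  thus ?thesis using E1(1) by blast
qed

end
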